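(* Let $m>3$ and $t\ge 0$ be integers, and let $n=2(mt+1)$. Then the set $[n]=\{1,\dots,n\}$ admits no $m$-good partition.
   Context: For integers $n>0$ and $m>1$, a partition of $[n]=\{1,\dots,n\}$ into nonempty parts is called $m$-good if every part has at most $m$ elements and the sum of the elements of every part is a power of $m$, i.e. equals $m^s$ for some integer $s\ge 0$ (so $m^0=1$ is allowed). *)

theory Defs
  imports Main
begin

definition is_partition_of :: "nat set set \<Rightarrow> nat set \<Rightarrow> bool" where
  "is_partition_of P A \<longleftrightarrow>
     \<Union>P = A \<and> (\<forall>B\<in>P. B \<noteq> {}) \<and>
     (\<forall>B\<in>P. \<forall>C\<in>P. B \<noteq> C \<longrightarrow> B \<inter> C = {})"

definition m_good :: "nat \<Rightarrow> nat \<Rightarrow> nat set set \<Rightarrow> bool" where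
  "m_good m n P \<longleftrightarrow> is_partition_of P {1..n} \<and>
     (\<forall>B\<in>P. card B \<le> m \<and> (\<exists>s::nat. \<Sum>B = m ^ s))"

end

theory Submission
  imports Defs
begin

lemma sum_one_set:
  fixes B :: "nat set"
  assumes "finite B" "B \<noteq> {}" "B \<subseteq> {1..n}" "\<Sum>B = 1"
  shows "B = {1}"
proof -
  have "\<forall>x\<in>B. x = 1"
  proof
    fix x assume x: "x \<in> B"
    have "x \<le> \<Sum>B" using member_le_sum[of x B "\<lambda>x. x"] x assms(1) by simp
    moreover have "x \<ge> 1" using x assms(3) by auto
    ultimately show "x = 1" using assms(4) by simp
  qed
  then show ?thesis using assms(2) by auto
qed

lemma gauss1: "2 * \<Sum>{1..n::nat} = n * (n + 1)"
  by (induct n) auto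

theorem mainTheorem1:
  fixes m t :: nat
  assumes "m > 3"
  shows "\<not> (\<exists>P. m_good m (2 * (m * t + 1)) P)"
proof
  assume "\<exists>P. m_good m (2 * (m * t + 1)) P"
  then obtain P where P: "m_good m (2 * (m * t + 1)) P" by blast
  define n where "n = 2 * (m * t + 1)"
  have U: "\<Union>P = {1..n}" and ne: "\<forall>B\<in>P. B \<noteq> {}"
    and dj: "\<forall>B\<in>P. \<forall>C\<in>P. B \<noteq> C \<longrightarrow> B \<inter> C = {}"
    and pw: "\<forall>B\<in>P. \<exists>s::nat. \<Sum>B = m ^ s"
    using P unfolding m_good_def is_partition_of_def n_def by auto
  have sub: "\<forall>B\<in>P. B \<subseteq> {1..n}" using U by auto
  have finP: "finite P"
    by (rule finite_subset[of P "Pow {1..n}"]) (use sub in auto)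
  have finB: "\<forall>B\<in>P. finite B" using sub finite_subset by blast
  have tot: "\<Sum>{1..n} = (\<Sum>B\<in>P. \<Sum>B)"
    using sum.Union_disjoint[OF finB dj, of "\<lambda>x. x"] U by (simp add: o_def)
  have dv: "\<forall>B\<in>P - {{1}}. m dvd \<Sum>B"
  proof
    fix B assume B: "B \<in> P - {{1}}"
    then obtain s where s: "\<Sum>B = m ^ s" using pw by auto
    show "m dvd \<Sum>B"
    proof (cases s)
      case 0
      then have "B = {1}" using sum_one_set[of B n] B finB ne sub s by auto
      then show ?thesis using B by auto
    next
      case (Suc k) then show ?thesis using s by simp
    qed
  qed
  have "(\<Sum>B\<in>P. \<Sum>B) mod m \<in> {0, 1}"
  proof (cases "{1} \<in> P")
    case True
    have "(\<Sum>B\<in>P. \<Sum>B) = \<Sum>{1::nat} + (\<Sum>B\<in>P - {{1}}. \<Sum>B)"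
      using sum.remove[OF finP True, of Sum] by simp
    moreover have "m dvd (\<Sum>B\<in>P - {{1}}. \<Sum>B)" by (rule dvd_sum) (use dv in blast)
    ultimately have "(\<Sum>B\<in>P. \<Sum>B) mod m = 1 mod m" 
    proof -
      assume a: "(\<Sum>B\<in>P. \<Sum>B) = \<Sum>{1::nat} + (\<Sum>B\<in>P - {{1}}. \<Sum>B)" "m dvd (\<Sum>B\<in>P - {{1}}. \<Sum>B)"
      then obtain k where "(\<Sum>B\<in>P - {{1}}. \<Sum>B) = m * k" by (auto elim!: dvdE)
      then have "(\<Sum>B\<in>P. \<Sum>B) = 1 + m * k" using a by simp
      then show ?thesis by (metis mod_mult_self2)
    qed
    then show ?thesis using assms by simp
  next
    case False
    then have "P - {{1}} = P" by auto
    then have "m dvd (\<Sum>B\<in>P. \<Sum>B)" using dv dvd_sum[of P m Sum] by simp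
    then show ?thesis by simp
  qed
  moreover have "\<Sum>{1..n} = (m*t+1) * (2*(m*t+1)+1)"
  proof -
    have "2 * \<Sum>{1..n} = 2 * ((m*t+1) * (2*(m*t+1)+1))"
      using gauss1[of n] unfolding n_def by (simp add: algebra_simps)
    then show ?thesis by simp
  qed
  moreover have "(m*t+1) * (2*(m*t+1)+1) = m * (t*(2*m*t+3) + 2*t) + 3"
    by (simp add: algebra_simps)
  ultimately have "3 mod m \<in> {0,1}" using tot by (metis mod_mult_self4)
  then show False using assms by auto
qed

end
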